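(* In the setting below, fix $m\ge2$, $p=1$ and the item parameters $\beta^*$, and let the number of users $n\to\infty$ with user parameters $\theta^*_1,\dots,\theta^*_n$ (possibly depending on $n$) such that $\gamma\ge\gamma_0$ for all $n$, for some constant $\gamma_0>0$ independent of $n$. Then the output $\beta$ of the spectral algorithm is a consistent estimator of $\beta^*$: for every $\epsilon>0$, $$\lim_{n\to\infty}\Pr\big(\|\beta-\beta^*\|_2<\epsilon\big)=1 .$$
   Context: Setting. Let $n\ge1$ (number of users) and $m\ge2$ (number of items). Fix user parameters $\theta^*_1,\dots,\theta^*_n\in\mathbb R$ and item parameters $\beta^*_1,\dots,\beta^*_m\in\mathbb R$ normalized so that $\sum_{i=1}^m\beta^*_i=0$. Write $w^*_i=e^{\beta^*_i}$, $\kappa=\max_i\beta^*_i-\min_i\beta^*_i$, and $\pi^*_i=w^*_i/\sum_{k=1}^m w^*_k$. Random sampling scheme: the assignment matrix $A\in\{0,1\}^{n\times m}$ has i.i.d. Bernoulli$(p)$ entries, $p\in(0,1]$; independently of $A$, the responses $X_{li}\in\{0,1\}$ ($l\in[n]$, $i\in[m]$) are independent with $\Pr(X_{li}=1)=e^{\theta^*_l}/(e^{\theta^*_l}+e^{\beta^*_i})$ (only responses with $A_{li}=1$ are used). Let $\gamma=\min_{l\in[n],\,i\ne j\in[m]}\mathbb E[X_{li}(1-X_{lj})]$. Let $B=A^\top A$ and $d=\frac32 mnp^2$. Define $m\times m$ matrices $P,P^*$ by, for $i\neq j$, $P_{ij}=\frac1d\sum_{l=1}^nA_{li}A_{lj}X_{li}(1-X_{lj})$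 and $P^*_{ij}=\frac1d\sum_{l=1}^nA_{li}A_{lj}\mathbb E[X_{li}(1-X_{lj})]$, and $P_{ii}=1-\sum_{k\ne i}P_{ik}$, $P^*_{ii}=1-\sum_{k\ne i}P^*_{ik}$. Spectral algorithm: compute a stationary distribution $\pi$ of $P$ (a probability vector with $\pi^\top P=\pi^\top$) and output $\beta\in\mathbb R^m$ with $\beta_i=\log\pi_i-\frac1m\sum_{k=1}^m\log\pi_k$. $\|\cdot\|_2$ denotes the Euclidean norm of vectors. *)

theory Defs
  imports "HOL-Probability.Probability"
begin

text \<open>Users are indexed by {..<n}, items by {..<m}.
  theta l = user parameter, beta i = item parameter.\<close>

definition resp_prob :: "(nat \<Rightarrow> real) \<Rightarrow> (nat \<Rightarrow> real) \<Rightarrow> nat \<Rightarrow> nat \<Rightarrow> real" where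
  "resp_prob theta beta l i = exp (theta l) / (exp (theta l) + exp (beta i))"

text \<open>gamma = min over users l and distinct items i, j of E[X_li (1 - X_lj)].\<close>
definition gamma_param :: "nat \<Rightarrow> nat \<Rightarrow> (nat \<Rightarrow> real) \<Rightarrow> (nat \<Rightarrow> real) \<Rightarrow> real" where
  "gamma_param n m theta beta =
     Min {resp_prob theta beta l i * (1 - resp_prob theta beta l j) | l i j.
            l < n \<and> i < m \<and> j < m \<and> i \<noteq> j}"

text \<open>Random sampling: assignment matrix A with iid Bernoulli(p) entries, and independent
  responses X with Pr(X_li = 1) = resp_prob; sampled jointly as a pair (A, X).\<close>
definition sample_pmf ::
  "nat \<Rightarrow> nat \<Rightarrow> real \<Rightarrow> (nat \<Rightarrow> real) \<Rightarrow> (nat \<Rightarrow> real)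
     \<Rightarrow> ((nat \<times> nat \<Rightarrow> bool) \<times> (nat \<times> nat \<Rightarrow> bool)) pmf" where
  "sample_pmf n m p theta beta =
     pair_pmf (Pi_pmf ({..<n} \<times> {..<m}) False (\<lambda>_. bernoulli_pmf p))
              (Pi_pmf ({..<n} \<times> {..<m}) False
                 (\<lambda>(l, i). bernoulli_pmf (resp_prob theta beta l i)))"

definition ind :: "bool \<Rightarrow> real" where
  "ind b = (if b then 1 else 0)"

definition P_offdiag :: "nat \<Rightarrow> nat \<Rightarrow> real \<Rightarrow> (nat \<times> nat \<Rightarrow> bool) \<Rightarrow> (nat \<times> nat \<Rightarrow> bool)
     \<Rightarrow> nat \<Rightarrow> nat \<Rightarrow> real" where
  "P_offdiag n m p A X i j =
     (\<Sum>l<n. ind (A (l, i)) * ind (A (l, j)) * ind (X (l, i)) * (1 - ind (X (l, j))))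
       / (3 / 2 * real m * real n * p ^ 2)"

definition P_mat :: "nat \<Rightarrow> nat \<Rightarrow> real \<Rightarrow> (nat \<times> nat \<Rightarrow> bool) \<Rightarrow> (nat \<times> nat \<Rightarrow> bool)
     \<Rightarrow> nat \<Rightarrow> nat \<Rightarrow> real" where
  "P_mat n m p A X i j =
     (if i = j then 1 - (\<Sum>k\<in>{..<m} - {i}. P_offdiag n m p A X i k)
      else P_offdiag n m p A X i j)"

definition stationary_dist :: "nat \<Rightarrow> (nat \<Rightarrow> nat \<Rightarrow> real) \<Rightarrow> (nat \<Rightarrow> real) \<Rightarrow> bool" where
  "stationary_dist m Q pv \<longleftrightarrow>
     (\<forall>i<m. pv i \<ge> 0) \<and> (\<Sum>i<m. pv i) = 1 \<and>
     (\<forall>j<m. (\<Sum>i<m. pv i * Q i j) = pv j)"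

definition spectral_beta :: "nat \<Rightarrow> (nat \<Rightarrow> real) \<Rightarrow> nat \<Rightarrow> real" where
  "spectral_beta m pv i = ln (pv i) - (\<Sum>k<m. ln (pv k)) / real m"

definition l2_dist :: "nat \<Rightarrow> (nat \<Rightarrow> real) \<Rightarrow> (nat \<Rightarrow> real) \<Rightarrow> real" where
  "l2_dist m x y = sqrt (\<Sum>i<m. (x i - y i)^2)"

end

theory Submission
  imports Defs
begin


lemma prod_two:
  assumes "finite D" "a \<in> D" "b \<in> D" "a \<noteq> b" "\<And>k. k \<in> D \<Longrightarrow> k \<noteq> a \<Longrightarrow> k \<noteq> b \<Longrightarrow> h k = 1"
  shows "(\<Prod>k\<in>D. h k) = h a * (h b :: real)"
proof -
  have "(\<Prod>k\<in>D. h k) = h a * (\<Prod>k\<in>D - {a}. h k)" using assms by (simp add: prod.remove)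
  also have "(\<Prod>k\<in>D - {a}. h k) = h b * (\<Prod>k\<in>D - {a} - {b}. h k)" using assms
    by (subst prod.remove[of _ b]) auto
  also have "(\<Prod>k\<in>D - {a} - {b}. h k) = 1" using assms by (intro prod.neutral) auto
  finally show ?thesis by simp
qed

lemma hoeff:
  fixes q :: "nat \<Rightarrow> nat \<Rightarrow> real"
  assumes q0: "\<And>l i. 0 \<le> q l i" and q1: "\<And>l i. q l i \<le> 1"
    and ij: "i < m" "j < m" "i \<noteq> j" and n: "n \<ge> 1" and \<delta>: "\<delta> \<ge> 0"
  shows "measure_pmf.prob (Pi_pmf ({..<n} \<times> {..<m}) False (\<lambda>(l, i). bernoulli_pmf (q l i)))
     {x. \<delta> * n \<le> \<bar>(\<Sum>l<n. ind (x (l, i)) * (1 - ind (x (l, j)))) - (\<Sum>l<n. q l i * (1 - q l j))\<bar>}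
     \<le> 2 * exp (-2 * \<delta>\<^sup>2 * n)"
proof -
  define D where "D = {..<n} \<times> {..<m}"
  define Xp where "Xp = Pi_pmf D False (\<lambda>(l, i). bernoulli_pmf (q l i))"
  define Y where "Y = (\<lambda>l (\<omega>::nat\<times>nat\<Rightarrow>bool). ind (\<omega> (l, i)) * (1 - ind (\<omega> (l, j))))"
  define K where "K = (\<lambda>l::nat. {(l, i), (l, j)})"
  define Yf where "Yf = (\<lambda>l (g::nat\<times>nat\<Rightarrow>bool). ind (g (l, i)) * (1 - ind (g (l, j))))"
  have finD: "finite D" by (simp add: D_def)
  have i0: "prob_space.indep_vars (measure_pmf Xp) (\<lambda>_. count_space UNIV) (\<lambda>x f. f x) D"
    unfolding Xp_def by (rule indep_vars_Pi_pmf[OF finD])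
  have i1: "prob_space.indep_vars (measure_pmf Xp) (\<lambda>l. PiM (K l) (\<lambda>_. count_space UNIV)) (\<lambda>l \<omega>. restrict (\<lambda>k. \<omega> k) (K l)) {..<n}"
    by (rule prob_space.indep_vars_restrict[OF measure_pmf.prob_space_axioms, OF i0]) (auto simp: K_def D_def ij disjoint_family_on_def)
  have i2: "prob_space.indep_vars (measure_pmf Xp) (\<lambda>_. borel) (\<lambda>l \<omega>. Yf l (restrict (\<lambda>k. \<omega> k) (K l))) {..<n}"
  proof (rule prob_space.indep_vars_compose2[OF measure_pmf.prob_space_axioms, OF i1])
    fix l assume "l \<in> {..<n}"
    have a: "(\<lambda>g. g (l, i)) \<in> measurable (PiM (K l) (\<lambda>_. count_space UNIV)) (count_space UNIV)"
      by (rule measurable_component_singleton) (simp add: K_def)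
    have b: "(\<lambda>g. g (l, j)) \<in> measurable (PiM (K l) (\<lambda>_. count_space UNIV)) (count_space UNIV)"
      by (rule measurable_component_singleton) (simp add: K_def)
    have c: "(\<lambda>v::bool. ind v) \<in> borel_measurable (count_space UNIV)" by simp
    show "Yf l \<in> borel_measurable (PiM (K l) (\<lambda>_. count_space UNIV))"
      unfolding Yf_def
      by (intro borel_measurable_times borel_measurable_diff borel_measurable_const
          measurable_compose[OF a c] measurable_compose[OF b c])
  qed
  have i3: "prob_space.indep_vars (measure_pmf Xp) (\<lambda>_. borel) Y {..<n}"
    using i2 by (rule prob_space.indep_vars_cong[OF measure_pmf.prob_space_axioms, THEN iffD1, rotated 3]) (auto simp: Y_def Yf_def K_def)
  have EY: "measure_pmf.expectation Xp (Y l) = q l i * (1 - q l j)" if "l < n" for l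
  proof -
    define f where "f = (\<lambda>k v. if k = (l, i) then ind v else if k = (l, j) then 1 - ind v else (1::real))"
    have "measure_pmf.expectation Xp (Y l) = measure_pmf.expectation Xp (\<lambda>y. \<Prod>k\<in>D. f k (y k))"
      by (intro Bochner_Integration.integral_cong refl, subst prod_two[of D "(l,i)" "(l,j)"])
         (use that ij in \<open>auto simp: D_def f_def Y_def\<close>)
    also have "\<dots> = (\<Prod>k\<in>D. measure_pmf.expectation ((\<lambda>(l, i). bernoulli_pmf (q l i)) k) (\<lambda>v. f k v))"
      unfolding Xp_def
      by (rule expectation_prod_Pi_pmf[OF finD]) (auto simp: f_def ind_def integrable_measure_pmf_finite)
    also have "\<dots> = q l i * (1 - q l j)"
      by (subst prod_two[of D "(l,i)" "(l,j)"])
         (use that ij in \<open>auto simp: D_def f_def ind_def q0 q1\<close>)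
    finally show ?thesis .
  qed
  interpret H: Hoeffding_ineq "measure_pmf Xp" "{..<n}" Y "\<lambda>_. 0" "\<lambda>_. 1" "\<Sum>l<n. measure_pmf.expectation Xp (Y l)"
    using i3 by unfold_locales (auto simp: Y_def ind_def)
  have "measure_pmf.prob Xp {x\<in>space (measure_pmf Xp). \<bar>(\<Sum>l<n. Y l x) - (\<Sum>l<n. measure_pmf.expectation Xp (Y l))\<bar> \<ge> \<delta> * n}
        \<le> 2 * exp (-2 * (\<delta> * n)\<^sup>2 / (\<Sum>l<n. (1 - 0)\<^sup>2))"
    by (rule H.Hoeffding_ineq_abs_ge) (use \<delta> n in auto)
  also have "(\<Sum>l<n. measure_pmf.expectation Xp (Y l)) = (\<Sum>l<n. q l i * (1 - q l j))"
    using EY by simp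
  also have "-2 * (\<delta> * n)\<^sup>2 / (\<Sum>l<n. (1 - 0)\<^sup>2) = -2 * \<delta>\<^sup>2 * n"
    using n by (simp add: power2_eq_square)
  finally show ?thesis unfolding Xp_def D_def Y_def by simp
qed



lemma determ:
  fixes w pv :: "nat \<Rightarrow> real" and E N :: "nat \<Rightarrow> nat \<Rightarrow> real"
  assumes m: "m \<ge> 1" and wmin: "wmin > 0" and wb: "\<And>i. i<m \<Longrightarrow> wmin \<le> w i \<and> w i \<le> W"
   and Esym: "\<And>i j. i<m \<Longrightarrow> j<m \<Longrightarrow> w i * E i j = w j * E j i"
   and Elow: "\<And>i j. i<m \<Longrightarrow> j<m \<Longrightarrow> i\<noteq>j \<Longrightarrow> c \<le> E i j" and c: "c > 0"
   and d: "d \<ge> 0"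
   and close: "\<And>i j. i<m \<Longrightarrow> j<m \<Longrightarrow> i\<noteq>j \<Longrightarrow> \<bar>N i j - E i j\<bar> \<le> d"
   and bal: "\<And>j. j<m \<Longrightarrow> (\<Sum>i\<in>{..<m}-{j}. pv i * N i j) = pv j * (\<Sum>k\<in>{..<m}-{j}. N j k)"
   and pv0: "\<And>i. i<m \<Longrightarrow> pv i \<ge> 0" and pv1: "(\<Sum>i<m. pv i) = 1"
  obtains M where "M > 0" "\<And>i. i<m \<Longrightarrow> pv i / w i \<le> M"
    "\<And>i. i<m \<Longrightarrow> (1 - real m ^ 2 * W * d / (wmin * c)) * M \<le> pv i / w i"
proof -
  define r where "r i = pv i / w i" for i
  define M where "M = Max (r ` {..<m})"
  have ne: "r ` {..<m} \<noteq> {}" proof - have "0 \<in> {..<m}" using m by simp then show ?thesis by blast qed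
  obtain j where j: "j < m" "r j = M"
    using Max_in[OF _ ne] unfolding M_def by auto
  have rle: "r i \<le> M" if "i < m" for i unfolding M_def using that by (intro Max_ge) auto
  have wpos: "w i > 0" if "i < m" for i using wb[OF that] wmin by linarith
  have pvle1: "pv i \<le> 1" if "i < m" for i
  proof -
    have "pv i \<le> (\<Sum>k<m. pv k)" using that pv0 by (intro member_le_sum) auto
    then show ?thesis using pv1 by simp
  qed
  have Mw: "M * w j = pv j" using j wpos[OF j(1)] by (auto simp: r_def)
  define S where "S = {..<m} - {j}"
  have finS: "finite S" by (simp add: S_def)
  have eq1: "(\<Sum>i\<in>S. w i * E i j * (M - r i)) =
      (\<Sum>k\<in>S. pv j * (E j k - N j k)) + (\<Sum>i\<in>S. pv i * (N i j - E i j))"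
  proof -
    have "(\<Sum>i\<in>S. w i * E i j * (M - r i)) = (\<Sum>i\<in>S. M * w j * E j i - pv i * E i j)"
    proof (intro sum.cong refl)
      fix i assume i: "i \<in> S"
      then have "i < m" by (simp add: S_def)
      have p: "w i * r i = pv i" using wpos[OF \<open>i<m\<close>] by (simp add: r_def)
      have e: "w i * E i j = w j * E j i" using Esym[OF \<open>i<m\<close> j(1)] .
      have "w i * E i j * (M - r i) = M * (w i * E i j) - (w i * r i) * E i j"
        by (simp add: algebra_simps)
      also have "\<dots> = M * (w j * E j i) - pv i * E i j" by (simp only: e p)
      finally show "w i * E i j * (M - r i) = M * w j * E j i - pv i * E i j" by (simp add: mult.assoc)
    qed
    also have "\<dots> = pv j * (\<Sum>k\<in>S. E j k) - (\<Sum>i\<in>S. pv i * E i j)"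
      by (simp add: Mw sum_subtractf sum_distrib_left)
    also have "(\<Sum>i\<in>S. pv i * E i j) = (\<Sum>i\<in>S. pv i * N i j) - (\<Sum>i\<in>S. pv i * (N i j - E i j))"
      by (simp add: sum_subtractf algebra_simps)
    also have "(\<Sum>i\<in>S. pv i * N i j) = pv j * (\<Sum>k\<in>S. N j k)" using bal[OF j(1)] by (simp add: S_def)
    finally show ?thesis by (simp add: sum_subtractf sum_distrib_left algebra_simps)
  qed
  have b1: "(\<Sum>k\<in>S. pv j * (E j k - N j k)) \<le> (\<Sum>k\<in>S. d)"
  proof (intro sum_mono)
    fix k assume k: "k \<in> S"
    then have "k < m" "k \<noteq> j" by (auto simp: S_def)
    have "\<bar>E j k - N j k\<bar> \<le> d" using close[OF j(1) \<open>k<m\<close>] \<open>k\<noteq>j\<close> by (simp add: abs_minus_commute)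
    then have "pv j * (E j k - N j k) \<le> pv j * d"
      using pv0[OF j(1)] by (intro mult_left_mono) auto
    also have "\<dots> \<le> d" using mult_right_mono[OF pvle1[OF j(1)] d] by simp
    finally show "pv j * (E j k - N j k) \<le> d" .
  qed
  have b2: "(\<Sum>i\<in>S. pv i * (N i j - E i j)) \<le> (\<Sum>i<m. pv i * d)"
  proof -
    have "(\<Sum>i\<in>S. pv i * (N i j - E i j)) \<le> (\<Sum>i\<in>S. pv i * d)"
    proof (intro sum_mono)
      fix i assume i: "i \<in> S"
      then have "i < m" "i \<noteq> j" by (auto simp: S_def)
      have "\<bar>N i j - E i j\<bar> \<le> d" using close[OF \<open>i<m\<close> j(1)] \<open>i\<noteq>j\<close> by simp
      then show "pv i * (N i j - E i j) \<le> pv i * d"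
        using pv0[OF \<open>i<m\<close>] by (intro mult_left_mono) auto
    qed
    also have "\<dots> \<le> (\<Sum>i<m. pv i * d)"
      by (rule sum_mono2) (use pv0 d in \<open>auto simp: S_def\<close>)
    finally show ?thesis .
  qed
  have cardS: "card S = m - 1" using j by (simp add: S_def)
  have key: "(\<Sum>i\<in>S. w i * E i j * (M - r i)) \<le> real m * d"
  proof -
    have "(\<Sum>i\<in>S. w i * E i j * (M - r i)) \<le> (\<Sum>k\<in>S. d) + (\<Sum>i<m. pv i * d)"
      using eq1 b1 b2 by linarith
    also have "(\<Sum>k\<in>S. d) = (real m - 1) * d" using cardS m by (simp add: of_nat_diff)
    also have "(\<Sum>i<m. pv i * d) = d" using pv1 by (simp add: sum_distrib_right[symmetric])
    finally show ?thesis by (simp add: algebra_simps)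
  qed
  have gap: "M - r i \<le> real m * d / (wmin * c)" if i: "i < m" "i \<noteq> j" for i
  proof -
    have iS: "i \<in> S" using i by (simp add: S_def)
    have nn: "\<And>k. k \<in> S \<Longrightarrow> 0 \<le> w k * E k j * (M - r k)"
    proof -
      fix k assume "k \<in> S"
      then have "k < m" "k \<noteq> j" by (auto simp: S_def)
      then show "0 \<le> w k * E k j * (M - r k)"
        using wpos[of k] Elow[of k j] c j(1) rle[of k]
        by (intro mult_nonneg_nonneg) auto
    qed
    have "w i * E i j * (M - r i) \<le> (\<Sum>k\<in>S. w k * E k j * (M - r k))"
      by (rule member_le_sum) (use iS nn finS in auto)
    then have t: "w i * E i j * (M - r i) \<le> real m * d"
      using key by linarith
    have we: "wmin * c \<le> w i * E i j"
      using wb[OF i(1)] Elow[OF i(1) j(1) i(2)] wmin c by (intro mult_mono) auto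
    have Mr: "0 \<le> M - r i" using rle[OF i(1)] by simp
    have "wmin * c * (M - r i) \<le> w i * E i j * (M - r i)" using we Mr by (rule mult_right_mono)
    with t have "wmin * c * (M - r i) \<le> real m * d" by linarith
    then show ?thesis using wmin c by (simp add: field_simps)
  qed
  obtain k where k: "k < m" "pv k \<ge> 1 / real m"
  proof (rule ccontr)
    assume "\<not> thesis"
    then have lt: "\<And>k. k < m \<Longrightarrow> pv k < 1 / real m" using that by force
    have "(\<Sum>k<m. pv k) < (\<Sum>k<m. 1 / real m)"
    proof (intro sum_strict_mono)
      have "0 \<in> {..<m}" using m by simp
      then show "{..<m} \<noteq> {}" by blast
    qed (auto intro: lt)
    then show False using pv1 m by simp
  qed
  have Mlow: "1 \<le> M * (real m * W)"
  proof -
    have "r k \<le> M" using rle[OF k(1)] .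
    have wk: "w k \<le> W" "0 < w k" using wb[OF k(1)] wpos[OF k(1)] by auto
    have "1 / real m \<le> pv k" using k by simp
    also have "pv k = r k * w k" using wk by (simp add: r_def)
    also have "\<dots> \<le> M * W"
    proof -
      have "0 \<le> r k" using pv0[OF k(1)] wk by (simp add: r_def)
      then show ?thesis using \<open>r k \<le> M\<close> wk by (intro mult_mono) auto
    qed
    finally have "1 / real m \<le> M * W" .
    then show ?thesis using m by (simp add: field_simps)
  qed
  have Mpos: "M > 0"
  proof (rule ccontr)
    assume "\<not> M > 0"
    have W0: "0 \<le> real m * W" using wb[OF j(1)] wmin by simp
    have "M * (real m * W) \<le> 0"
      using mult_nonpos_nonneg[OF _ W0, of M] \<open>\<not> M > 0\<close> by linarith
    then show False using Mlow by linarith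
  qed
  show ?thesis
  proof (rule that[of M])
    show "M > 0" by fact
    show "pv i / w i \<le> M" if "i < m" for i using rle[OF that] by (simp add: r_def)
    fix i assume i: "i < m"
    have eta0: "0 \<le> real m ^ 2 * W * d / (wmin * c)"
    proof -
      have "W \<ge> 0" using wb[OF j(1)] wmin by linarith
      then show ?thesis using d wmin c by (intro divide_nonneg_pos mult_nonneg_nonneg) auto
    qed
    show "(1 - real m ^ 2 * W * d / (wmin * c)) * M \<le> pv i / w i"
    proof (cases "i = j")
      case True
      have "0 \<le> real m ^ 2 * W * d / (wmin * c) * M" using eta0 Mpos by (intro mult_nonneg_nonneg) auto
      then show ?thesis using j True by (simp add: r_def[symmetric] algebra_simps)
    next
      case False
      have "real m * d / (wmin * c) = 1 * (real m * d / (wmin * c))" by simp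
      also have "\<dots> \<le> M * (real m * W) * (real m * d / (wmin * c))"
        using Mlow d wmin c by (intro mult_right_mono) auto
      also have "\<dots> = real m ^ 2 * W * d / (wmin * c) * M" by (simp add: power2_eq_square)
      finally have "M - r i \<le> real m ^ 2 * W * d / (wmin * c) * M" using gap[OF i False] by linarith
      then show ?thesis by (simp add: r_def[symmetric] algebra_simps)
    qed
  qed
qed



lemma final:
  fixes w pv b :: "nat \<Rightarrow> real"
  assumes m: "m \<ge> 1" and wb: "\<And>i. w i = exp (b i)" and bsum: "(\<Sum>i<m. b i) = 0"
    and M: "M > 0" and eta: "0 \<le> \<eta>" "\<eta> \<le> 1/2"
    and up: "\<And>i. i<m \<Longrightarrow> pv i / w i \<le> M" and lo: "\<And>i. i<m \<Longrightarrow> (1-\<eta>)*M \<le> pv i / w i"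
  shows "l2_dist m (spectral_beta m pv) b \<le> 2 * real m * \<eta>"
proof -
  define t where "t i = ln (pv i / w i) - ln M" for i
  have wpos: "w i > 0" for i by (simp add: wb)
  have rpos: "pv i / w i > 0" if "i < m" for i
  proof -
    have "(1-\<eta>)*M > 0" using eta M by simp
    then show ?thesis using lo[OF that] by linarith
  qed
  have tb: "-2*\<eta> \<le> t i \<and> t i \<le> 0" if i: "i < m" for i
  proof
    show "t i \<le> 0" using up[OF i] rpos[OF i] M by (simp add: t_def)
    have "ln ((1-\<eta>)*M) \<le> ln (pv i / w i)" using lo[OF i] rpos[OF i] eta M by (subst ln_le_cancel_iff) auto
    moreover have "ln ((1-\<eta>)*M) = ln (1-\<eta>) + ln M" using eta M by (simp add: ln_mult_pos)
    moreover have "-\<eta> - 2*\<eta>\<^sup>2 \<le> ln (1 - \<eta>)" using eta by (intro ln_one_minus_pos_lower_bound) auto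
    moreover have "2*\<eta>\<^sup>2 \<le> \<eta>" using mult_right_mono[OF eta(2) eta(1)] by (simp add: power2_eq_square)
    ultimately show "-2*\<eta> \<le> t i" by (simp add: t_def)
  qed
  have lnpv: "ln (pv i) = t i + ln M + b i" if i: "i < m" for i
  proof -
    have "ln (pv i / w i * w i) = ln (pv i / w i) + ln (w i)"
      using rpos[OF i] wpos[of i] by (rule ln_mult_pos)
    then have "ln (pv i) = ln (pv i / w i) + ln (w i)"
      using wpos[of i] by simp
    then show ?thesis by (simp add: t_def wb)
  qed
  have sumln: "(\<Sum>k<m. ln (pv k)) = (\<Sum>k<m. t k) + real m * ln M"
    using lnpv bsum by (simp add: sum.distrib)
  define T where "T = (\<Sum>k<m. t k) / real m"
  have m0: "real m > 0" using m by simp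
  have Tb: "-2*\<eta> \<le> T \<and> T \<le> 0"
  proof
    have "(\<Sum>k<m. t k) \<le> (\<Sum>k<m. 0)" using tb by (intro sum_mono) auto
    then show "T \<le> 0" using m0 by (simp add: T_def divide_nonpos_pos)
    have "(\<Sum>k<m. -2*\<eta>) \<le> (\<Sum>k<m. t k)" using tb by (intro sum_mono) auto
    then have "real m * (-2*\<eta>) \<le> (\<Sum>k<m. t k)" by simp
    then show "-2*\<eta> \<le> T" using m0 by (simp add: T_def field_simps)
  qed
  have diff: "\<bar>spectral_beta m pv i - b i\<bar> \<le> 2*\<eta>" if i: "i < m" for i
  proof -
    have "spectral_beta m pv i - b i = t i - T"
      using m0 by (simp add: spectral_beta_def lnpv[OF i] sumln T_def field_simps)
    then show ?thesis using tb[OF i] Tb by linarith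
  qed
  have "(\<Sum>i<m. (spectral_beta m pv i - b i)^2) \<le> (\<Sum>i<m. (2*\<eta>)^2)"
  proof (intro sum_mono)
    fix i assume "i \<in> {..<m}"
    then have "\<bar>spectral_beta m pv i - b i\<bar> \<le> \<bar>2*\<eta>\<bar>" using diff eta by auto
    then show "(spectral_beta m pv i - b i)^2 \<le> (2*\<eta>)^2" by (simp add: abs_le_square_iff)
  qed
  also have "\<dots> = real m * (2*\<eta>)^2" by simp
  also have "\<dots> \<le> (real m)^2 * (2*\<eta>)^2"
    using m by (intro mult_right_mono) (auto simp: power2_eq_square)
  also have "\<dots> = (2 * real m * \<eta>)^2" by (simp add: power2_eq_square)
  finally have "l2_dist m (spectral_beta m pv) b \<le> sqrt ((2 * real m * \<eta>)^2)"
    unfolding l2_dist_def by (rule real_sqrt_le_mono)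
  also have "\<dots> = 2 * real m * \<eta>" using eta by simp
  finally show ?thesis .
qed



lemma bernoulli_one: "bernoulli_pmf 1 = return_pmf True"
  by (rule pmf_eqI) (auto simp: pmf_bernoulli_True pmf_bernoulli_False split: split_indicator)

lemma sample_eq:
  "sample_pmf n m 1 theta beta =
     map_pmf (Pair (\<lambda>x. x \<in> {..<n} \<times> {..<m}))
       (Pi_pmf ({..<n} \<times> {..<m}) False (\<lambda>(l, i). bernoulli_pmf (resp_prob theta beta l i)))"
proof -
  have "Pi_pmf ({..<n} \<times> {..<m}) False (\<lambda>_. bernoulli_pmf 1) =
        Pi_pmf ({..<n} \<times> {..<m}) False (\<lambda>_. return_pmf True)" by (simp add: bernoulli_one)
  also have "\<dots> = return_pmf (\<lambda>x. x \<in> {..<n} \<times> {..<m})"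
    by (subst Pi_pmf_return_pmf) auto
  finally show ?thesis unfolding sample_pmf_def by (simp add: pair_return_pmf1)
qed

lemma resp_bounds: "0 \<le> resp_prob theta beta l i" "resp_prob theta beta l i \<le> 1"
  unfolding resp_prob_def by (auto simp: divide_le_eq add_pos_pos)

lemma resp_compl: "1 - resp_prob theta beta l j = exp (beta j) / (exp (theta l) + exp (beta j))"
proof -
  have "exp (theta l) + exp (beta j) > 0" by (simp add: add_pos_pos)
  then have "exp (theta l) + exp (beta j) \<noteq> 0" by simp
  then show ?thesis unfolding resp_prob_def by (simp add: field_simps)
qed



theorem mainTheorem3:
  fixes m :: nat and beta_star :: "nat \<Rightarrow> real"
    and theta_star :: "nat \<Rightarrow> nat \<Rightarrow> real" and gamma0 :: real and \<epsilon> :: real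
  assumes "m \<ge> 2"
    and "(\<Sum>i<m. beta_star i) = 0"
    and "gamma0 > 0"
    and "\<And>n. n \<ge> 1 \<Longrightarrow> gamma_param n m (theta_star n) beta_star \<ge> gamma0"
    and "\<epsilon> > 0"
  shows "(\<lambda>n. measure_pmf.prob (sample_pmf n m 1 (theta_star n) beta_star)
            {(A, X). \<forall>pv. stationary_dist m (P_mat n m 1 A X) pv \<longrightarrow>
                       l2_dist m (spectral_beta m pv) beta_star < \<epsilon>})
         \<longlonglongrightarrow> 1"
proof -
  note m2 = assms(1) and bsum = assms(2) and g0 = assms(3) and gam = assms(4) and eps = assms(5)
  have m1: "m \<ge> 1" using m2 by simp
  have m0: "real m > 0" using m2 by simp
  define w where "w i = exp (beta_star i)" for i
  define wmin where "wmin = Min (w ` {..<m})"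
  define W where "W = Max (w ` {..<m})"
  have ne: "w ` {..<m} \<noteq> {}"
  proof - have "0 \<in> {..<m}" using m2 by simp then show ?thesis by blast qed
  have wminpos: "wmin > 0"
  proof -
    obtain k where "k < m" "wmin = w k" using Min_in[OF _ ne] unfolding wmin_def by auto
    then show ?thesis by (simp add: w_def)
  qed
  have wb: "wmin \<le> w i \<and> w i \<le> W" if "i < m" for i
    unfolding wmin_def W_def using that by (auto intro!: Min_le Max_ge)
  have Wpos: "W > 0" using wb[of 0] wminpos m2 by force
  define \<eta> where "\<eta> = min (1/2) (\<epsilon> / (4 * real m))"
  have eta0: "0 < \<eta>" using eps m0 by (simp add: \<eta>_def)
  have eta1: "\<eta> \<le> 1/2" by (simp add: \<eta>_def)
  have eta2: "2 * real m * \<eta> < \<epsilon>"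
  proof -
    have "\<eta> \<le> \<epsilon> / (4 * real m)" by (simp add: \<eta>_def)
    then have "2 * real m * \<eta> \<le> 2 * real m * (\<epsilon> / (4 * real m))" by (rule mult_left_mono) (use m0 in auto)
    also have "\<dots> = \<epsilon> / 2" using m0 by (simp add: field_simps)
    finally show ?thesis using eps by linarith
  qed
  define \<delta> where "\<delta> = \<eta> * wmin * gamma0 / (real m ^ 2 * W)"
  have dpos: "\<delta> > 0" unfolding \<delta>_def using eta0 wminpos g0 Wpos m0 by simp
  define q where "q n l i = resp_prob (theta_star n) beta_star l i" for n l i
  define Xp where "Xp n = Pi_pmf ({..<n} \<times> {..<m}) False (\<lambda>(l, i). bernoulli_pmf (q n l i))" for n
  define a0 where "a0 n = (\<lambda>x::nat\<times>nat. x \<in> {..<n} \<times> {..<m})" for n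
  define T where "T n = {(A, X). \<forall>pv. stationary_dist m (P_mat n m 1 A X) pv \<longrightarrow>
                       l2_dist m (spectral_beta m pv) beta_star < \<epsilon>}" for n
  define Nf :: "nat \<Rightarrow> (nat\<times>nat \<Rightarrow> bool) \<Rightarrow> nat \<Rightarrow> nat \<Rightarrow> real" where "Nf n x i j = (\<Sum>l<n. ind (x (l, i)) * (1 - ind (x (l, j))))" for n x i j
  define Ef :: "nat \<Rightarrow> nat \<Rightarrow> nat \<Rightarrow> real" where "Ef n i j = (\<Sum>l<n. q n l i * (1 - q n l j))" for n i j
  define G where "G n = {x. \<forall>i<m. \<forall>j<m. i \<noteq> j \<longrightarrow> \<bar>Nf n x i j - Ef n i j\<bar> < \<delta> * real n}" for n
  define Bd where "Bd n = (\<lambda>(i, j). if i \<noteq> j then {x. \<delta> * real n \<le> \<bar>Nf n x i j - Ef n i j\<bar>} else {})" for n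

  have det: "(a0 n, x) \<in> T n" if x: "x \<in> G n" and n: "n \<ge> 1" for n x
  proof -
    have n0: "real n > 0" using n by simp
    define D where "D = 3 / 2 * real m * real n"
    have D0: "D > 0" unfolding D_def using m0 n0 by simp
    have Poff: "P_offdiag n m 1 (a0 n) x i j = Nf n x i j / D" if "i < m" "j < m" for i j
      unfolding P_offdiag_def Nf_def D_def a0_def using that
      by (auto simp: ind_def intro!: sum.cong arg_cong2[where f="(/)"])
    show ?thesis unfolding T_def
    proof (clarify)
      fix pv assume st: "stationary_dist m (P_mat n m 1 (a0 n) x) pv"
      have pv0: "\<And>i. i < m \<Longrightarrow> pv i \<ge> 0" and pv1: "(\<Sum>i<m. pv i) = 1"
        using st by (auto simp: stationary_dist_def)
      have bal: "(\<Sum>i\<in>{..<m}-{j}. pv i * Nf n x i j) = pv j * (\<Sum>k\<in>{..<m}-{j}. Nf n x j k)"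
        if j: "j < m" for j
      proof -
        have s: "(\<Sum>i<m. pv i * P_mat n m 1 (a0 n) x i j) = pv j"
          using st j by (auto simp: stationary_dist_def)
        have "(\<Sum>i<m. pv i * P_mat n m 1 (a0 n) x i j) =
              pv j * P_mat n m 1 (a0 n) x j j + (\<Sum>i\<in>{..<m}-{j}. pv i * P_mat n m 1 (a0 n) x i j)"
          using j by (subst sum.remove[of _ j]) auto
        also have "P_mat n m 1 (a0 n) x j j = 1 - (\<Sum>k\<in>{..<m}-{j}. Nf n x j k) / D"
          unfolding P_mat_def using j by (simp add: Poff sum_divide_distrib)
        also have "(\<Sum>i\<in>{..<m}-{j}. pv i * P_mat n m 1 (a0 n) x i j) =
                   (\<Sum>i\<in>{..<m}-{j}. pv i * Nf n x i j) / D"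
          unfolding sum_divide_distrib
          by (intro sum.cong refl) (use j in \<open>auto simp: P_mat_def Poff\<close>)
        finally have "pv j * (1 - (\<Sum>k\<in>{..<m}-{j}. Nf n x j k) / D) +
             (\<Sum>i\<in>{..<m}-{j}. pv i * Nf n x i j) / D = pv j" using s by simp
        then have "(\<Sum>i\<in>{..<m}-{j}. pv i * Nf n x i j) / D = pv j * ((\<Sum>k\<in>{..<m}-{j}. Nf n x j k) / D)"
          by (simp add: algebra_simps)
        then show ?thesis using D0 by (simp add: field_simps)
      qed
      have Esym: "w i * Ef n i j = w j * Ef n j i" if "i < m" "j < m" for i j
        unfolding Ef_def sum_distrib_left
      proof (intro sum.cong refl)
        fix l
        have "exp (theta_star n l) + w i > 0" "exp (theta_star n l) + w j > 0"
          by (simp_all add: w_def add_pos_pos)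
        then have a: "exp (theta_star n l) + w i \<noteq> 0" "exp (theta_star n l) + w j \<noteq> 0"
          by simp_all
        show "w i * (q n l i * (1 - q n l j)) = w j * (q n l j * (1 - q n l i))"
          unfolding q_def resp_compl using a
          by (simp add: resp_prob_def w_def[symmetric] field_simps)
      qed
      have gfin: "finite {resp_prob (theta_star n) beta_star l i * (1 - resp_prob (theta_star n) beta_star l j) |l i j.
            l < n \<and> i < m \<and> j < m \<and> i \<noteq> j}" (is "finite ?S")
      proof (rule finite_subset)
        show "?S \<subseteq> (\<lambda>(l, i, j). resp_prob (theta_star n) beta_star l i * (1 - resp_prob (theta_star n) beta_star l j))
                 ` ({..<n} \<times> {..<m} \<times> {..<m})" by force
      qed auto
      have Elow: "real n * gamma0 \<le> Ef n i j" if "i < m" "j < m" "i \<noteq> j" for i j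
      proof -
        have "(\<Sum>l<n. gamma0) \<le> Ef n i j"
          unfolding Ef_def
        proof (intro sum_mono)
          fix l assume l: "l \<in> {..<n}"
          have "gamma0 \<le> gamma_param n m (theta_star n) beta_star" using gam n by simp
          also have "\<dots> \<le> q n l i * (1 - q n l j)"
            unfolding gamma_param_def q_def using l that by (intro Min_le gfin) auto
          finally show "gamma0 \<le> q n l i * (1 - q n l j)" .
        qed
        then show ?thesis by simp
      qed
      have close: "\<bar>Nf n x i j - Ef n i j\<bar> \<le> \<delta> * real n" if "i < m" "j < m" "i \<noteq> j" for i j
        using x that by (auto simp: G_def intro: less_imp_le)
      obtain M where M: "M > 0" "\<And>i. i<m \<Longrightarrow> pv i / w i \<le> M"
        "\<And>i. i<m \<Longrightarrow> (1 - real m ^ 2 * W * (\<delta> * real n) / (wmin * (real n * gamma0))) * M \<le> pv i / w i"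
        by (rule determ[of m wmin w W "Ef n" "real n * gamma0" "\<delta> * real n" "Nf n x" pv])
           (use m1 wminpos wb Esym Elow g0 n0 dpos close bal pv0 pv1 in auto)
      have "real m ^ 2 * W * (\<delta> * real n) / (wmin * (real n * gamma0)) = \<eta>"
        unfolding \<delta>_def using m0 Wpos wminpos n0 g0 by (simp add: field_simps)
      then have M3: "\<And>i. i<m \<Longrightarrow> (1 - \<eta>) * M \<le> pv i / w i" using M(3) by simp
      have "l2_dist m (spectral_beta m pv) beta_star \<le> 2 * real m * \<eta>"
        by (rule final[of m w beta_star M \<eta> pv]) (use m1 bsum M(1,2) M3 eta0 eta1 in \<open>auto simp: w_def\<close>)
      then show "l2_dist m (spectral_beta m pv) beta_star < \<epsilon>" using eta2 by linarith
    qed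
  qed

  have bound: "1 - real m * real m * (2 * exp (-2 * \<delta>\<^sup>2 * real n)) \<le>
       measure_pmf.prob (sample_pmf n m 1 (theta_star n) beta_star) (T n)" if n: "n \<ge> 1" for n
  proof -
    have "measure_pmf.prob (sample_pmf n m 1 (theta_star n) beta_star) (T n) =
          measure_pmf.prob (Xp n) (Pair (a0 n) -` T n)"
      unfolding sample_eq Xp_def a0_def q_def by simp
    also have "\<dots> \<ge> measure_pmf.prob (Xp n) (G n)"
      using det[OF _ n] by (intro measure_pmf.finite_measure_mono) auto
    finally have a: "measure_pmf.prob (Xp n) (G n) \<le> measure_pmf.prob (sample_pmf n m 1 (theta_star n) beta_star) (T n)" .
    have b: "measure_pmf.prob (Xp n) (UNIV - G n) = 1 - measure_pmf.prob (Xp n) (G n)"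
      using measure_pmf.prob_compl[of "G n" "Xp n"] by simp
    have "UNIV - G n \<subseteq> (\<Union>p\<in>{..<m} \<times> {..<m}. Bd n p)"
      by (force simp: G_def Bd_def not_less)
    then have "measure_pmf.prob (Xp n) (UNIV - G n) \<le> measure_pmf.prob (Xp n) (\<Union>p\<in>{..<m} \<times> {..<m}. Bd n p)"
      by (intro measure_pmf.finite_measure_mono) auto
    also have "\<dots> \<le> (\<Sum>p\<in>{..<m} \<times> {..<m}. measure_pmf.prob (Xp n) (Bd n p))"
      by (intro measure_pmf.finite_measure_subadditive_finite) auto
    also have "\<dots> \<le> (\<Sum>p\<in>{..<m} \<times> {..<m}. 2 * exp (-2 * \<delta>\<^sup>2 * real n))"
    proof (intro sum_mono)
      fix p assume p: "p \<in> {..<m} \<times> {..<m}"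
      obtain i j where ij: "p = (i, j)" by (cases p)
      show "measure_pmf.prob (Xp n) (Bd n p) \<le> 2 * exp (-2 * \<delta>\<^sup>2 * real n)"
      proof (cases "i = j")
        case True then show ?thesis by (simp add: Bd_def ij)
      next
        case False
        have "measure_pmf.prob (Xp n) (Bd n p) =
           measure_pmf.prob (Pi_pmf ({..<n} \<times> {..<m}) False (\<lambda>(l, i). bernoulli_pmf (q n l i)))
           {x. \<delta> * n \<le> \<bar>(\<Sum>l<n. ind (x (l, i)) * (1 - ind (x (l, j)))) - (\<Sum>l<n. q n l i * (1 - q n l j))\<bar>}"
          using False by (simp add: Bd_def ij Xp_def Nf_def Ef_def)
        also have "\<dots> \<le> 2 * exp (-2 * \<delta>\<^sup>2 * real n)"
          by (rule hoeff) (use p ij False n dpos in \<open>auto simp: q_def resp_bounds\<close>)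
        finally show ?thesis .
      qed
    qed
    also have "\<dots> = real m * real m * (2 * exp (-2 * \<delta>\<^sup>2 * real n))" by simp
    finally show ?thesis using a b by linarith
  qed

  define c where "c = exp (-2 * \<delta>\<^sup>2)"
  have c1: "norm c < 1" unfolding c_def using dpos by simp
  have lim: "(\<lambda>n. 1 - real m * real m * (2 * c ^ n)) \<longlonglongrightarrow> 1"
    using tendsto_diff[OF tendsto_const tendsto_mult[OF tendsto_const tendsto_mult[OF tendsto_const LIMSEQ_power_zero[OF c1]]], of 1 "real m * real m" 2]
    by simp
  have ceq: "exp (-2 * \<delta>\<^sup>2 * real n) = c ^ n" for n
    unfolding c_def by (subst exp_of_nat_mult[symmetric]) (simp add: mult.commute)
  show ?thesis
  proof (rule tendsto_sandwich[OF _ _ lim tendsto_const[of 1]])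
    show "\<forall>\<^sub>F n in sequentially. 1 - real m * real m * (2 * c ^ n) \<le>
            measure_pmf.prob (sample_pmf n m 1 (theta_star n) beta_star)
            {(A, X). \<forall>pv. stationary_dist m (P_mat n m 1 A X) pv \<longrightarrow> l2_dist m (spectral_beta m pv) beta_star < \<epsilon>}"
      using eventually_ge_at_top[of 1]
    proof eventually_elim
      case (elim n)
      show ?case using bound[OF elim] unfolding ceq T_def .
    qed
    show "\<forall>\<^sub>F n in sequentially.
            measure_pmf.prob (sample_pmf n m 1 (theta_star n) beta_star)
            {(A, X). \<forall>pv. stationary_dist m (P_mat n m 1 A X) pv \<longrightarrow> l2_dist m (spectral_beta m pv) beta_star < \<epsilon>} \<le> 1"
      by (simp add: measure_pmf.prob_le_1)
  qed
qed

end
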